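(* Let $X$ be a Banach space, $k\in\mathbb{N}$, and let $(e_n)_n\in\mathcal{SM}_k(X)$ be a Schauder basic sequence; let $E$ be the Banach space with Schauder basis $(e_n)_n$. Let $d\in\mathbb{N}$ and let $(\widetilde e_n)_n$ be a plegma block generated $d$-spreading model of $E$. Then $(\widetilde e_n)_n\in\mathcal{SM}_{k+d}(X)$.
   Context: $[M]^k$: $k$-subsets of $M\subseteq\mathbb{N}$ (increasing enumerations, $M(l)$ the $l$-th element of $M$). A $k$-sequence in $X$ is a map $[\mathbb{N}]^k\to X$, $s\mapsto x_s$. Plegma family: $(s_j)_{j=1}^l$ in $[M]^k$ with $s_1(i)<\dots<s_l(i)$ for all $i\le k$ and $s_l(i)<s_1(i+1)$ for $i<k$; a plegma pair is a plegma family of length 2. $(x_s)_{s\in[M]^k}$ generates the Hamel basis $(e_n)$ of a seminormed space $(E,\|\cdot\|_* )$ as a $k$-spreading model if for some null sequence $\delta_l>0$: $|\|\sum_{j=1}^m a_jx_{s_j}\|-\|\sum_{j=1}^m a_je_j\|_*|\le\delta_l$ for all $m\le l$, plegma $(s_j)_{j=1}^m$ in $[M]^k$ with $s_1(1)\ge M(l)$, $a_j\in[-1,1]$. $\mathcal{SM}_k(X)$ is the set of all sequences generated in this way by some $k$-sequence in $X$ and some infinite $M$. For a Banach space $Y$ with a Schauder basis, a $d$-sequence $(y_t)_{t\in[\mathbb{N}]^d}$ is plegma block if the $y_t$ are finitely supported and $\mathrm{supp}(y_{t_1})<\mathrm{supp}(y_{t_2})$ (i.e. $\max<\min$) for every plegma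 pair $(t_1,t_2)$ in $[\mathbb{N}]^d$; a $d$-spreading model of $Y$ is plegma block generated if it is generated by some plegma block $d$-sequence. *)

theory Defs
  imports "HOL-Analysis.Analysis" "HOL-Library.Infinite_Set"
begin

text \<open>k-subsets of naturals are finite sets of cardinality k; the i-th element
  (0-indexed here, i.e. elt s 0 is s(1) of the paper) of s in increasing order.\<close>
definition elt :: "nat set \<Rightarrow> nat \<Rightarrow> nat" where
  "elt s i = sorted_list_of_set s ! i"

text \<open>Plegma family s 0, ..., s (l-1) in [M]^k (indices shifted by one).\<close>
definition plegma :: "nat \<Rightarrow> nat set \<Rightarrow> (nat \<Rightarrow> nat set) \<Rightarrow> nat \<Rightarrow> bool" where
  "plegma k M s l \<longleftrightarrow>
     (\<forall>j<l. s j \<subseteq> M \<and> finite (s j) \<and> card (s j) = k) \<and>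
     (\<forall>i<k. \<forall>j. Suc j < l \<longrightarrow> elt (s j) i < elt (s (Suc j)) i) \<and>
     (\<forall>i. Suc i < k \<longrightarrow> elt (s (l - 1)) i < elt (s 0) (Suc i))"

definition seminorm_on :: "'c::real_vector set \<Rightarrow> ('c \<Rightarrow> real) \<Rightarrow> bool" where
  "seminorm_on V p \<longleftrightarrow> subspace V \<and> (\<forall>v\<in>V. 0 \<le> p v) \<and>
     (\<forall>v\<in>V. \<forall>c. p (c *\<^sub>R v) = \<bar>c\<bar> * p v) \<and>
     (\<forall>v\<in>V. \<forall>w\<in>V. p (v + w) \<le> p v + p w)"

text \<open>The k-sequence x (restricted to [M]^k) generates the sequence e with seminorm p
  (sequence indices shifted: e 0 is e_1 of the paper; M(l) is enumerate M (l-1)).\<close>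
definition generates ::
  "nat \<Rightarrow> (nat set \<Rightarrow> 'a::real_normed_vector) \<Rightarrow> nat set \<Rightarrow> (nat \<Rightarrow> 'c::real_vector) \<Rightarrow> ('c \<Rightarrow> real) \<Rightarrow> bool" where
  "generates k x M e p \<longleftrightarrow>
     (\<exists>\<delta>::nat \<Rightarrow> real. (\<forall>l. 0 < \<delta> l) \<and> \<delta> \<longlonglongrightarrow> 0 \<and>
        (\<forall>l m s a. 1 \<le> m \<longrightarrow> m \<le> l \<longrightarrow> plegma k M s m \<longrightarrow>
           enumerate M (l - 1) \<le> elt (s 0) 0 \<longrightarrow> (\<forall>j<m. \<bar>a j\<bar> \<le> (1::real)) \<longrightarrow>
           \<bar>norm (\<Sum>j<m. a j *\<^sub>R x (s j)) - p (\<Sum>j<m. a j *\<^sub>R e j)\<bar> \<le> \<delta> l))"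

definition spreading_model ::
  "nat \<Rightarrow> (nat set \<Rightarrow> 'a::real_normed_vector) \<Rightarrow> nat set \<Rightarrow> (nat \<Rightarrow> 'c::real_vector) \<Rightarrow> ('c \<Rightarrow> real) \<Rightarrow> 'c set \<Rightarrow> bool" where
  "spreading_model k x M e p V \<longleftrightarrow>
     V = span (range e) \<and> inj e \<and> independent (range e) \<and> seminorm_on V p \<and>
     generates k x M e p"

definition SM :: "nat \<Rightarrow> 'a::real_normed_vector set \<Rightarrow> (nat \<Rightarrow> 'c::real_vector) \<Rightarrow> ('c \<Rightarrow> real) \<Rightarrow> 'c set \<Rightarrow> bool" where
  "SM k X e p V \<longleftrightarrow>
     (\<exists>(x::nat set \<Rightarrow> 'a) M. infinite M \<and> (\<forall>s. finite s \<and> card s = k \<longrightarrow> x s \<in> X) \<and>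
        spreading_model k x M e p V)"

definition schauder_basis :: "(nat \<Rightarrow> 'b::real_normed_vector) \<Rightarrow> bool" where
  "schauder_basis e \<longleftrightarrow> (\<forall>y. \<exists>!a::nat \<Rightarrow> real. (\<lambda>n. \<Sum>j<n. a j *\<^sub>R e j) \<longlonglongrightarrow> y)"

definition coeff :: "(nat \<Rightarrow> 'b::real_normed_vector) \<Rightarrow> 'b \<Rightarrow> nat \<Rightarrow> real" where
  "coeff e y = (THE a. (\<lambda>n. \<Sum>j<n. a j *\<^sub>R e j) \<longlonglongrightarrow> y)"

definition supp :: "(nat \<Rightarrow> 'b::real_normed_vector) \<Rightarrow> 'b \<Rightarrow> nat set" where
  "supp e y = {n. coeff e y n \<noteq> 0}"

definition plegma_block :: "nat \<Rightarrow> (nat \<Rightarrow> 'b::real_normed_vector) \<Rightarrow> (nat set \<Rightarrow> 'b) \<Rightarrow> bool" where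
  "plegma_block d e y \<longleftrightarrow>
     (\<forall>t. finite t \<and> card t = d \<longrightarrow> finite (supp e (y t))) \<and>
     (\<forall>t. plegma d UNIV t 2 \<longrightarrow> (\<forall>a\<in>supp e (y (t 0)). \<forall>b\<in>supp e (y (t 1)). a < b))"

end

theory Submission
  imports Defs
begin

lemma elt_facts:
  assumes "finite u" "c < c'" "c' < card u"
  shows "elt u c < elt u c'"
proof -
  have "sorted_wrt (<) (sorted_list_of_set u)" by (rule strict_sorted_list_of_set)
  moreover have "length (sorted_list_of_set u) = card u" by simp
  ultimately show ?thesis using assms unfolding elt_def
    by (simp add: sorted_wrt_iff_nth_less)
qed

lemma elt_le:
  assumes "finite u" "c \<le> c'" "c' < card u"
  shows "elt u c \<le> elt u c'"
  using elt_facts[OF assms(1) _ assms(3), of c] assms(2) by (cases "c = c'") auto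

lemma elt_image:
  fixes f :: "nat \<Rightarrow> nat"
  assumes "\<And>c. Suc c < n \<Longrightarrow> f c < f (Suc c)"
  shows "\<And>c. c < n \<Longrightarrow> elt (f ` {..<n}) c = f c"
    and "card (f ` {..<n}) = n" and "finite (f ` {..<n})"
proof -
  have sm: "f a < f b" if "a < b" "b < n" for a b
    using that
  proof (induction b)
    case 0 then show ?case by simp
  next
    case (Suc b)
    then show ?case using assms[of b] by (cases "a = b") auto
  qed
  have L: "sorted_wrt (<) (map f [0..<n])"
    by (auto simp: sorted_wrt_iff_nth_less sm)
  have "sorted (map f [0..<n])" "distinct (map f [0..<n])"
    using L by (simp_all add: strict_sorted_iff)
  then have eq: "sorted_list_of_set (f ` {..<n}) = map f [0..<n]"
    using sorted_list_of_set.idem_if_sorted_distinct[of "map f [0..<n]"]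
    by (simp add: lessThan_atLeast0)
  show "elt (f ` {..<n}) c = f c" if "c < n" for c
    using that eq unfolding elt_def by simp
  have "inj_on f {..<n}"
    by (metis inj_on_def lessThan_iff linorder_neq_iff sm)
  then show "card (f ` {..<n}) = n" by (simp add: card_image)
  show "finite (f ` {..<n})" by simp
qed

lemma plegma_le:
  assumes "plegma n M u m" "c < n" "j \<le> j'" "j' < m"
  shows "elt (u j) c \<le> elt (u j') c"
  using assms(3,4)
proof (induction j')
  case 0 then show ?case by simp
next
  case (Suc j')
  show ?case
  proof (cases "j = Suc j'")
    case False
    then have "elt (u j) c \<le> elt (u j') c" using Suc by auto
    moreover have "elt (u j') c < elt (u (Suc j')) c"
      using assms(1,2) Suc.prems unfolding plegma_def by auto
    ultimately show ?thesis by simp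
  qed simp
qed

lemma plegma_less:
  assumes "plegma n M u m" "c < n" "j < j'" "j' < m"
  shows "elt (u j) c < elt (u j') c"
proof -
  obtain j'' where j'': "j' = Suc j''" using assms(3) by (cases j') auto
  have "elt (u j) c \<le> elt (u j'') c" using plegma_le[OF assms(1,2)] assms j'' by auto
  moreover have "elt (u j'') c < elt (u j') c"
    using assms(1,2,4) j'' unfolding plegma_def by auto
  ultimately show ?thesis by simp
qed

lemma plegma_cross:
  assumes "plegma n M u m" "c < c'" "c' < n" "j < m" "j' < m"
  shows "elt (u j) c < elt (u j') c'"
proof -
  have fin: "finite (u j')" "card (u j') = n" using assms(1,5) unfolding plegma_def by auto
  have "elt (u j) c \<le> elt (u (m-1)) c" using plegma_le[OF assms(1)] assms by auto
  also have "\<dots> < elt (u 0) (Suc c)" using assms(1,2,3) unfolding plegma_def by auto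
  also have "\<dots> \<le> elt (u 0) c'"
    using plegma_def assms elt_le by (metis Suc_leI gr_implies_not0 neq0_conv)
  also have "\<dots> \<le> elt (u j') c'" using plegma_le[OF assms(1)] assms by auto
  finally show ?thesis .
qed


lemma schauder_expand:
  fixes e :: "nat \<Rightarrow> 'b::real_normed_vector"
  assumes sb: "schauder_basis e" and fin: "finite (supp e v)"
  shows "v = (\<Sum>i\<in>supp e v. coeff e v i *\<^sub>R e i)"
proof -
  let ?c = "coeff e v"
  have ex: "\<exists>!a::nat \<Rightarrow> real. (\<lambda>n. \<Sum>j<n. a j *\<^sub>R e j) \<longlonglongrightarrow> v"
    using sb unfolding schauder_basis_def by blast
  have lim: "(\<lambda>n. \<Sum>j<n. ?c j *\<^sub>R e j) \<longlonglongrightarrow> v"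
    unfolding coeff_def by (rule theI'[OF ex])
  define K where "K = Suc (Max (insert 0 (supp e v)))"
  have sub: "supp e v \<subseteq> {..<n}" if "K \<le> n" for n
  proof
    fix i assume "i \<in> supp e v"
    then have "i \<le> Max (insert 0 (supp e v))" using fin by simp
    then show "i \<in> {..<n}" using that K_def by simp
  qed
  have ev: "eventually (\<lambda>n. (\<Sum>j<n. ?c j *\<^sub>R e j) = (\<Sum>i\<in>supp e v. ?c i *\<^sub>R e i)) sequentially"
    unfolding eventually_sequentially
  proof (intro exI allI impI)
    fix n assume "K \<le> n"
    then show "(\<Sum>j<n. ?c j *\<^sub>R e j) = (\<Sum>i\<in>supp e v. ?c i *\<^sub>R e i)"
      using sub by (intro sum.mono_neutral_right) (auto simp: supp_def)
  qed
  have "(\<lambda>n. \<Sum>j<n. ?c j *\<^sub>R e j) \<longlonglongrightarrow> (\<Sum>i\<in>supp e v. ?c i *\<^sub>R e i)"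
    by (rule tendsto_eventually[OF ev])
  then show ?thesis using lim LIMSEQ_unique by blast
qed

lemma regroup:
  fixes v :: "nat \<Rightarrow> nat \<Rightarrow> 'v::real_vector"
  assumes S: "\<And>j. j < m \<Longrightarrow> finite (S j) \<and> S j \<subseteq> {..<N}"
    and J: "\<And>j i. j < m \<Longrightarrow> i \<in> S j \<Longrightarrow> J i = j"
    and Jm: "\<And>i. J i < m"
    and w: "\<And>j i. i \<notin> S j \<Longrightarrow> w j i = 0"
  shows "(\<Sum>i<N. (\<alpha> (J i) * w (J i) i) *\<^sub>R v (J i) i) =
         (\<Sum>j<m. \<alpha> j *\<^sub>R (\<Sum>i\<in>S j. w j i *\<^sub>R v j i))"
proof -
  have "(\<Sum>i<N. (\<alpha> (J i) * w (J i) i) *\<^sub>R v (J i) i) =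
        (\<Sum>i<N. \<Sum>j<m. (\<alpha> j * w j i) *\<^sub>R v j i)"
  proof (rule sum.cong[OF refl])
    fix i
    have "(\<Sum>j<m. (\<alpha> j * w j i) *\<^sub>R v j i) = (\<alpha> (J i) * w (J i) i) *\<^sub>R v (J i) i"
    proof -
      have "(\<Sum>j<m. (\<alpha> j * w j i) *\<^sub>R v j i) = (\<alpha> (J i) * w (J i) i) *\<^sub>R v (J i) i
         + (\<Sum>j\<in>{..<m} - {J i}. (\<alpha> j * w j i) *\<^sub>R v j i)"
        by (rule sum.remove) (use Jm in auto)
      moreover have "(\<Sum>j\<in>{..<m} - {J i}. (\<alpha> j * w j i) *\<^sub>R v j i) = 0"
      proof (rule sum.neutral, rule ballI)
        fix j assume "j \<in> {..<m} - {J i}"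
        then have "i \<notin> S j" using J by auto
        then show "(\<alpha> j * w j i) *\<^sub>R v j i = 0" using w by simp
      qed
      ultimately show ?thesis by simp
    qed
    then show "(\<alpha> (J i) * w (J i) i) *\<^sub>R v (J i) i = (\<Sum>j<m. (\<alpha> j * w j i) *\<^sub>R v j i)" by simp
  qed
  also have "\<dots> = (\<Sum>j<m. \<Sum>i<N. (\<alpha> j * w j i) *\<^sub>R v j i)" by (rule sum.swap)
  also have "\<dots> = (\<Sum>j<m. \<alpha> j *\<^sub>R (\<Sum>i\<in>S j. w j i *\<^sub>R v j i))"
  proof (rule sum.cong[OF refl])
    fix j assume j: "j \<in> {..<m}"
    have "(\<Sum>i<N. (\<alpha> j * w j i) *\<^sub>R v j i) = \<alpha> j *\<^sub>R (\<Sum>i<N. w j i *\<^sub>R v j i)"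
      by (simp add: scaleR_sum_right)
    also have "(\<Sum>i<N. w j i *\<^sub>R v j i) = (\<Sum>i\<in>S j. w j i *\<^sub>R v j i)"
      using S[of j] j w by (intro sum.mono_neutral_right) auto
    finally show "(\<Sum>i<N. (\<alpha> j * w j i) *\<^sub>R v j i) = \<alpha> j *\<^sub>R (\<Sum>i\<in>S j. w j i *\<^sub>R v j i)" .
  qed
  finally show ?thesis .
qed

fun psi :: "(nat \<Rightarrow> nat) \<Rightarrow> (nat \<Rightarrow> nat) \<Rightarrow> nat \<Rightarrow> nat" where
  "psi G L 0 = L 0"
| "psi G L (Suc a) = psi G L a + G a + 1 + L (Suc a)"

lemma psi_ge: "L a \<le> psi G L a"
  by (cases a) auto

lemma psi_gap: "a < b \<Longrightarrow> psi G L a + G a + 1 \<le> psi G L b"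
proof (induction b)
  case 0 then show ?case by simp
next
  case (Suc b) then show ?case by (cases "a = b") auto
qed

lemma psi_mono: "a \<le> b \<Longrightarrow> psi G L a \<le> psi G L b"
  using psi_gap[of a b G L] by (cases "a = b") auto


lemma psi_strict: "a < b \<Longrightarrow> psi G L a < psi G L b"
  using psi_gap[of a b G L] by simp

lemma elt_in:
  assumes "finite u" "c < card u"
  shows "elt u c \<in> u"
proof -
  have "sorted_list_of_set u ! c \<in> set (sorted_list_of_set u)"
    using assms by (intro nth_mem) simp
  then show ?thesis using assms unfolding elt_def by simp
qed

lemma sum_div_scale:
  fixes v :: "nat \<Rightarrow> 'v::real_vector"
  shows "(\<Sum>i\<in>A. (f i / C) *\<^sub>R v i) = inverse C *\<^sub>R (\<Sum>i\<in>A. f i *\<^sub>R v i)"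
  by (simp add: scaleR_sum_right divide_inverse mult.commute)

lemma core:
  fixes x :: "nat set \<Rightarrow> 'a::real_normed_vector"
    and e :: "nat \<Rightarrow> 'b::real_normed_vector"
    and y :: "nat set \<Rightarrow> 'b"
    and et :: "nat \<Rightarrow> 'c::real_vector"
    and p :: "'c \<Rightarrow> real"
  assumes k1: "1 \<le> k" and d1: "1 \<le> d" and sb: "schauder_basis e"
    and infx: "infinite Mx" and genx: "generates k x Mx e norm"
    and infy: "infinite My" and pb: "plegma_block d e y" and geny: "generates d y My et p"
  shows "\<exists>z :: nat set \<Rightarrow> 'a. generates (k+d) z My et p"
proof -
  obtain \<delta>x where dxpos: "\<forall>l. 0 < \<delta>x l" and dxlim: "\<delta>x \<longlonglongrightarrow> 0"
    and dx: "\<And>l m s a. 1 \<le> m \<Longrightarrow> m \<le> l \<Longrightarrow> plegma k Mx s m \<Longrightarrow>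
           enumerate Mx (l - 1) \<le> elt (s 0) 0 \<Longrightarrow> (\<forall>j<m. \<bar>a j\<bar> \<le> (1::real)) \<Longrightarrow>
           \<bar>norm (\<Sum>j<m. a j *\<^sub>R x (s j)) - norm (\<Sum>j<m. a j *\<^sub>R e j)\<bar> \<le> \<delta>x l"
    using genx unfolding generates_def by blast
  obtain \<delta>y where dypos: "\<forall>l. 0 < \<delta>y l" and dylim: "\<delta>y \<longlonglongrightarrow> 0"
    and dy: "\<And>l m s a. 1 \<le> m \<Longrightarrow> m \<le> l \<Longrightarrow> plegma d My s m \<Longrightarrow>
           enumerate My (l - 1) \<le> elt (s 0) 0 \<Longrightarrow> (\<forall>j<m. \<bar>a j\<bar> \<le> (1::real)) \<Longrightarrow>
           \<bar>norm (\<Sum>j<m. a j *\<^sub>R y (s j)) - p (\<Sum>j<m. a j *\<^sub>R et j)\<bar> \<le> \<delta>y l"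
    using geny unfolding generates_def by blast
  define S where "S t = supp e (y t)" for t
  define c where "c t = coeff e (y t)" for t
  define B where "B t = Suc (Max (insert 0 (S t)))" for t
  define G where "G a = 1 + (\<Sum>t\<in>Pow {..<a}. B t)" for a
  define Cc where "Cc a = 1 + (\<Sum>t\<in>Pow {..<a}. \<Sum>i<B t. \<bar>c t i\<bar>)" for a
  have Cc1: "1 \<le> Cc a" for a
    unfolding Cc_def by (simp add: sum_nonneg)
  have Gmono: "G a \<le> G a'" if "a \<le> a'" for a a'
    unfolding G_def using that by (auto intro!: sum_mono2)
  have SB: "S t \<subseteq> {..<B t}" if "finite (S t)" for t
  proof
    fix i assume "i \<in> S t"
    then have "i \<le> Max (insert 0 (S t))" using that by simp
    then show "i \<in> {..<B t}" unfolding B_def by simp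
  qed
  have BG: "B t < G a" if "t \<subseteq> {..<a}" for t a
  proof -
    have "B t \<le> (\<Sum>t\<in>Pow {..<a}. B t)"
      using that by (intro member_le_sum) auto
    then show ?thesis unfolding G_def by simp
  qed
  have czero: "c t i = 0" if "i \<notin> S t" for t i
    using that unfolding S_def c_def supp_def by simp
  have Ccb: "\<bar>c t i\<bar> \<le> Cc a" if "t \<subseteq> {..<a}" "finite (S t)" for t i a
  proof (cases "i \<in> S t")
    case True
    then have iB: "i < B t" using SB[OF that(2)] by auto
    have "\<bar>c t i\<bar> \<le> (\<Sum>i<B t. \<bar>c t i\<bar>)"
      using iB by (intro member_le_sum) auto
    also have "\<dots> \<le> (\<Sum>t\<in>Pow {..<a}. \<Sum>i<B t. \<bar>c t i\<bar>)"
      using that(1) by (intro member_le_sum) (auto intro: sum_nonneg)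
    finally show ?thesis unfolding Cc_def by simp
  next
    case False then show ?thesis using czero Cc1[of a] by simp
  qed
  have L0ex: "\<exists>L. \<forall>l\<ge>L. \<delta>x l \<le> 1 / ((real a + 1) * Cc a)" for a
  proof -
    have pos: "0 < 1 / ((real a + 1) * Cc a)" using Cc1[of a] by simp
    from dxlim have "eventually (\<lambda>l. dist (\<delta>x l) 0 < 1 / ((real a + 1) * Cc a)) sequentially"
      using pos by (rule tendstoD)
    then obtain L where "\<forall>l\<ge>L. dist (\<delta>x l) 0 < 1 / ((real a + 1) * Cc a)"
      unfolding eventually_sequentially by blast
    then show ?thesis by (intro exI[of _ L]) (auto simp: dist_real_def)
  qed
  obtain L0 where L0: "\<And>a l. L0 a \<le> l \<Longrightarrow> \<delta>x l \<le> 1 / ((real a + 1) * Cc a)"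
    using L0ex by metis
  define L' where "L' a = max (G a) (L0 a)" for a
  define \<psi> where "\<psi> = psi G L'"
  define tt where "tt v = elt v ` {..<d}" for v :: "nat set"
  define \<sigma> where "\<sigma> v i = (\<lambda>c. enumerate Mx (\<psi> (elt v (d+c)) + i)) ` {..<k}" for v :: "nat set" and i
  define z where "z v = (\<Sum>i\<in>S (tt v). c (tt v) i *\<^sub>R x (\<sigma> v i))" for v
  define \<delta> where "\<delta> l = \<delta>y l + inverse (real (Suc l))" for l
  have "generates (k+d) z My et p"
    unfolding generates_def
  proof (intro exI[of _ \<delta>] conjI allI impI)
    show "0 < \<delta> l" for l using dypos unfolding \<delta>_def by (simp add: add_pos_pos)
    show "\<delta> \<longlonglongrightarrow> 0" unfolding \<delta>_def
      using tendsto_add[OF dylim LIMSEQ_inverse_real_of_nat] by simp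
  next
    fix l m u \<alpha>
    assume m1: "1 \<le> m" and ml: "m \<le> l" and pu: "plegma (k + d) My u m"
      and st: "enumerate My (l - 1) \<le> elt (u 0) 0" and \<alpha>1: "\<forall>j<m. \<bar>\<alpha> j\<bar> \<le> (1::real)"
    show "\<bar>norm (\<Sum>j<m. \<alpha> j *\<^sub>R z (u j)) - p (\<Sum>j<m. \<alpha> j *\<^sub>R et j)\<bar> \<le> \<delta> l"
    proof -
    have kd: "d < k + d" using k1 by simp
    have U: "u j \<subseteq> My" "finite (u j)" "card (u j) = k + d" if "j < m" for j
      using pu that unfolding plegma_def by auto
    define t where "t j = tt (u j)" for j
    have Tfacts: "(\<forall>c<d. elt (t j) c = elt (u j) c) \<and> card (t j) = d \<and> finite (t j)"
      if j: "j < m" for j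
    proof -
      have inc: "elt (u j) c < elt (u j) (Suc c)" if "Suc c < d" for c
        using elt_facts[OF U(2)[OF j]] U(3)[OF j] that by simp
      show ?thesis unfolding t_def tt_def using elt_image[where f="elt (u j)" and n=d, OF inc] by blast
    qed
    have Tsub: "t j \<subseteq> My" if j: "j < m" for j
      unfolding t_def tt_def using elt_in[OF U(2)[OF j]] U(1,3)[OF j] by auto
    have pt: "plegma d My t m"
      unfolding plegma_def
    proof (intro conjI allI impI)
      show "t j \<subseteq> My" if "j < m" for j using Tsub that by blast
      show "finite (t j)" if "j < m" for j using Tfacts that by blast
      show "card (t j) = d" if "j < m" for j using Tfacts that by blast
      show "elt (t j) i < elt (t (Suc j)) i" if "i < d" "Suc j < m" for i j
        using that Tfacts[of j] Tfacts[of "Suc j"] plegma_less[OF pu, of i j "Suc j"] by simp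
      show "elt (t (m - 1)) i < elt (t 0) (Suc i)" if "Suc i < d" for i
        using that Tfacts[of "m-1"] Tfacts[of 0] m1 plegma_cross[OF pu, of i "Suc i" "m-1" 0] by simp
    qed
    define a0 where "a0 = elt (u 0) d"
    have Tbelow: "t j \<subseteq> {..<a0}" if j: "j < m" for j
    proof
      fix n assume "n \<in> t j"
      then obtain c where "c < d" "n = elt (u j) c" unfolding t_def tt_def by auto
      then show "n \<in> {..<a0}" unfolding a0_def
        using plegma_cross[OF pu, of c d j 0] kd j m1 by auto
    qed
    have finS: "finite (S (t j))" if j: "j < m" for j
      using pb Tfacts[OF j] unfolding plegma_block_def S_def by blast
    have Sord: "n < n'" if "j' < j" "j < m" "n \<in> S (t j')" "n' \<in> S (t j)" for j j' n n'
    proof -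
      define tp where "tp q = (if q = 0 then t j' else t j)" for q :: nat
      have "plegma d UNIV tp 2"
        unfolding plegma_def
      proof (intro conjI allI impI)
        show "tp q \<subseteq> UNIV" for q by simp
        show "finite (tp q)" if "q < 2" for q
          using Tfacts[of j] Tfacts[of j'] \<open>j' < j\<close> \<open>j < m\<close> unfolding tp_def by auto
        show "card (tp q) = d" if "q < 2" for q
          using Tfacts[of j] Tfacts[of j'] \<open>j' < j\<close> \<open>j < m\<close> unfolding tp_def by auto
        show "elt (tp q) i < elt (tp (Suc q)) i" if "i < d" "Suc q < 2" for i q
          using that Tfacts[of j] Tfacts[of j'] \<open>j' < j\<close> \<open>j < m\<close>
            plegma_less[OF pu, of i j' j] unfolding tp_def by auto
        show "elt (tp (2 - 1)) i < elt (tp 0) (Suc i)" if "Suc i < d" for i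
          using that Tfacts[of j] Tfacts[of j'] \<open>j' < j\<close> \<open>j < m\<close>
            plegma_cross[OF pu, of i "Suc i" j j'] unfolding tp_def by auto
      qed
      then have "\<forall>a\<in>supp e (y (tp 0)). \<forall>b\<in>supp e (y (tp 1)). a < b"
        using pb unfolding plegma_block_def by blast
      then show ?thesis using that unfolding S_def tp_def by simp
    qed
    define N where "N = G a0"
    have N1: "1 \<le> N" unfolding N_def G_def by simp
    have SN: "S (t j) \<subseteq> {..<N}" if j: "j < m" for j
      using SB[OF finS[OF j]] BG[OF Tbelow[OF j]] unfolding N_def by auto
    define P where "P i = {j. j < m \<and> (\<forall>j'\<le>j. \<forall>n\<in>S (t j'). n < i)}" for i
    define J where "J i = min (m - 1) (card (P i))" for i
    have Jm: "J i < m" for i unfolding J_def using m1 by simp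
    have JS: "J i = j" if j: "j < m" and i: "i \<in> S (t j)" for i j
    proof -
      have "P i = {..<j}"
      proof
        show "P i \<subseteq> {..<j}"
        proof
          fix j'' assume "j'' \<in> P i"
          then have "j'' < m" "\<forall>j'\<le>j''. \<forall>n\<in>S (t j'). n < i" unfolding P_def by auto
          show "j'' \<in> {..<j}"
          proof (rule ccontr)
            assume "j'' \<notin> {..<j}"
            then have "j \<le> j''" by simp
            then have "i < i" using \<open>\<forall>j'\<le>j''. \<forall>n\<in>S (t j'). n < i\<close> i by blast
            then show False by simp
          qed
        qed
        show "{..<j} \<subseteq> P i"
        proof
          fix j'' assume "j'' \<in> {..<j}"
          then have jj: "j'' < j" by simp
          have "\<forall>j'\<le>j''. \<forall>n\<in>S (t j'). n < i"
          proof (intro allI impI ballI)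
            fix j' n assume "j' \<le> j''" "n \<in> S (t j')"
            then show "n < i" using Sord[of j' j n i] jj j i by simp
          qed
          then show "j'' \<in> P i" unfolding P_def using jj j by simp
        qed
      qed
      then show ?thesis unfolding J_def using j by simp
    qed
    have Jmono: "J i \<le> J i'" if "i \<le> i'" for i i'
    proof -
      have "P i \<subseteq> P i'"
      proof
        fix j assume "j \<in> P i"
        then show "j \<in> P i'" unfolding P_def using that by (auto intro: less_le_trans)
      qed
      moreover have "finite (P i')" unfolding P_def by simp
      ultimately have "card (P i) \<le> card (P i')" by (rule card_mono[rotated])
      then show ?thesis unfolding J_def by simp
    qed
    define s where "s i = \<sigma> (u (J i)) i" for i
    have Sfacts: "(\<forall>c'<k. elt (s i) c' = enumerate Mx (\<psi> (elt (u (J i)) (d+c')) + i))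
       \<and> card (s i) = k \<and> finite (s i) \<and> s i \<subseteq> Mx" for i
    proof -
      have inc: "enumerate Mx (\<psi> (elt (u (J i)) (d+c')) + i) < enumerate Mx (\<psi> (elt (u (J i)) (d+Suc c')) + i)"
        if "Suc c' < k" for c'
      proof -
        have "elt (u (J i)) (d+c') < elt (u (J i)) (d+Suc c')"
          using elt_facts[OF U(2)[OF Jm]] U(3)[OF Jm] that by simp
        then have "\<psi> (elt (u (J i)) (d+c')) < \<psi> (elt (u (J i)) (d+Suc c'))"
          unfolding \<psi>_def by (rule psi_strict)
        then show ?thesis using enumerate_mono[OF _ infx] by simp
      qed
      have "s i \<subseteq> Mx" unfolding s_def \<sigma>_def using enumerate_in_set[OF infx] by auto
      then show ?thesis unfolding s_def \<sigma>_def using elt_image[where f="\<lambda>c'. enumerate Mx (\<psi> (elt (u (J i)) (d+c')) + i)" and n=k, OF inc] by blast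
    qed
    have ps: "plegma k Mx s N"
      unfolding plegma_def
    proof (intro conjI allI impI)
      show "s i \<subseteq> Mx" for i using Sfacts by blast
      show "finite (s i)" for i using Sfacts by blast
      show "card (s i) = k" for i using Sfacts by blast
      show "elt (s i) c' < elt (s (Suc i)) c'" if "c' < k" "Suc i < N" for c' i
      proof -
        have "elt (u (J i)) (d+c') \<le> elt (u (J (Suc i))) (d+c')"
          using plegma_le[OF pu, of "d+c'" "J i" "J (Suc i)"] that Jmono[of i "Suc i"] Jm by simp
        then have "\<psi> (elt (u (J i)) (d+c')) \<le> \<psi> (elt (u (J (Suc i))) (d+c'))"
          unfolding \<psi>_def by (rule psi_mono)
        then show ?thesis using Sfacts[of i] Sfacts[of "Suc i"] that enumerate_mono[OF _ infx] by simp
      qed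
      show "elt (s (N - 1)) c' < elt (s 0) (Suc c')" if "Suc c' < k" for c'
      proof -
        define A where "A = elt (u (J (N - 1))) (d+c')"
        define Bv where "Bv = elt (u (J 0)) (d + Suc c')"
        have AB: "A < Bv" unfolding A_def Bv_def
          using plegma_cross[OF pu, of "d+c'" "d+Suc c'" "J (N-1)" "J 0"] that Jm by simp
        have "a0 \<le> elt (u (J (N - 1))) d" unfolding a0_def
          using plegma_le[OF pu, of d 0 "J (N-1)"] kd Jm by simp
        also have "\<dots> \<le> A" unfolding A_def
          using elt_le[OF U(2)[OF Jm]] U(3)[OF Jm] that by simp
        finally have "N \<le> G A" unfolding N_def by (rule Gmono)
        moreover have "\<psi> A + G A + 1 \<le> \<psi> Bv" unfolding \<psi>_def using AB by (rule psi_gap)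
        ultimately have "\<psi> A + (N - 1) < \<psi> Bv + 0" using N1 by simp
        then show ?thesis using Sfacts[of "N-1"] Sfacts[of 0] that enumerate_mono[OF _ infx]
          unfolding A_def Bv_def by simp
      qed
    qed
    define b where "b i = \<alpha> (J i) * c (t (J i)) i" for i
    define C where "C = Cc a0"
    have C1: "1 \<le> C" unfolding C_def by (rule Cc1)
    have "(\<Sum>i<N. (\<alpha> (J i) * c (t (J i)) i) *\<^sub>R x (\<sigma> (u (J i)) i)) =
          (\<Sum>j<m. \<alpha> j *\<^sub>R (\<Sum>i\<in>S (t j). c (t j) i *\<^sub>R x (\<sigma> (u j) i)))"
      by (rule regroup) (use finS SN JS Jm czero in auto)
    then have eqx: "(\<Sum>j<m. \<alpha> j *\<^sub>R z (u j)) = (\<Sum>i<N. b i *\<^sub>R x (s i))"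
      by (simp add: z_def t_def b_def s_def)
    have "(\<Sum>i<N. (\<alpha> (J i) * c (t (J i)) i) *\<^sub>R e i) =
          (\<Sum>j<m. \<alpha> j *\<^sub>R (\<Sum>i\<in>S (t j). c (t j) i *\<^sub>R e i))"
      by (rule regroup) (use finS SN JS Jm czero in auto)
    also have "\<dots> = (\<Sum>j<m. \<alpha> j *\<^sub>R y (t j))"
    proof (rule sum.cong[OF refl])
      fix j assume "j \<in> {..<m}"
      then have "y (t j) = (\<Sum>i\<in>S (t j). c (t j) i *\<^sub>R e i)"
        using schauder_expand[OF sb, of "y (t j)"] finS unfolding S_def c_def by auto
      then show "\<alpha> j *\<^sub>R (\<Sum>i\<in>S (t j). c (t j) i *\<^sub>R e i) = \<alpha> j *\<^sub>R y (t j)" by simp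
    qed
    finally have eqe: "(\<Sum>j<m. \<alpha> j *\<^sub>R y (t j)) = (\<Sum>i<N. b i *\<^sub>R e i)"
      by (simp add: b_def)
    have m0: "0 < m" using m1 by simp
    have "\<forall>c<d. elt (t 0) c = elt (u 0) c" using Tfacts[OF m0] by blast
    then have t00: "elt (t 0) 0 = elt (u 0) 0" using d1 by simp
    have ybound: "\<bar>norm (\<Sum>j<m. \<alpha> j *\<^sub>R y (t j)) - p (\<Sum>j<m. \<alpha> j *\<^sub>R et j)\<bar> \<le> \<delta>y l"
      using dy[OF m1 ml pt _ \<alpha>1] st t00 by simp
    have s00: "elt (s 0) 0 = enumerate Mx (\<psi> (elt (u (J 0)) d))"
      using Sfacts[of 0] k1 by simp
    have "L' a0 \<le> \<psi> a0" unfolding \<psi>_def by (rule psi_ge)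
    also have "\<dots> \<le> \<psi> (elt (u (J 0)) d)" unfolding \<psi>_def a0_def
      by (rule psi_mono) (use plegma_le[OF pu, of d 0 "J 0"] kd Jm in simp)
    finally have en: "enumerate Mx (L' a0 - 1) \<le> elt (s 0) 0"
      using s00 infx by simp
    have NL: "N \<le> L' a0" unfolding N_def L'_def by simp
    have bb: "\<forall>i<N. \<bar>b i / C\<bar> \<le> 1"
    proof (intro allI impI)
      fix i
      have "\<bar>c (t (J i)) i\<bar> \<le> C" unfolding C_def
        by (rule Ccb[OF Tbelow[OF Jm] finS[OF Jm]])
      moreover have "\<bar>\<alpha> (J i)\<bar> \<le> 1" using \<alpha>1 Jm by blast
      ultimately have "\<bar>b i\<bar> \<le> 1 * C" unfolding b_def abs_mult
        by (intro mult_mono) auto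
      then show "\<bar>b i / C\<bar> \<le> 1" using C1 by simp
    qed
    have xb0: "\<bar>norm (\<Sum>i<N. (b i / C) *\<^sub>R x (s i)) - norm (\<Sum>i<N. (b i / C) *\<^sub>R e i)\<bar> \<le> \<delta>x (L' a0)"
      by (rule dx[OF N1 NL ps en bb])
    define Xn where "Xn = norm (\<Sum>i<N. b i *\<^sub>R x (s i))"
    define En where "En = norm (\<Sum>i<N. b i *\<^sub>R e i)"
    have "\<bar>Xn / C - En / C\<bar> \<le> \<delta>x (L' a0)"
      using xb0 C1 unfolding sum_div_scale Xn_def En_def by (simp add: divide_inverse mult.commute)
    then have "\<bar>Xn - En\<bar> / C \<le> \<delta>x (L' a0)" using C1 by (simp add: diff_divide_distrib[symmetric])
    then have "\<bar>Xn - En\<bar> \<le> C * \<delta>x (L' a0)" using C1 by (simp add: divide_le_eq mult.commute)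
    also have "\<delta>x (L' a0) \<le> 1 / ((real a0 + 1) * C)"
      unfolding C_def by (rule L0) (simp add: L'_def)
    then have "C * \<delta>x (L' a0) \<le> C * (1 / ((real a0 + 1) * C))"
      using C1 by (intro mult_left_mono) auto
    also have "\<dots> = 1 / (real a0 + 1)" using C1 by simp
    also have "\<dots> \<le> inverse (real (Suc l))"
    proof -
      have "l - 1 \<le> enumerate My (l - 1)" by (rule le_enumerate[OF infy])
      also have "\<dots> \<le> elt (u 0) 0" by (rule st)
      also have "\<dots> < a0" unfolding a0_def
        using elt_facts[OF U(2)[of 0]] U(3)[of 0] m1 d1 k1 by simp
      finally have "l \<le> a0" using ml m1 by simp
      then show ?thesis by (simp add: divide_simps)
    qed
    finally have xbound: "\<bar>Xn - En\<bar> \<le> inverse (real (Suc l))" .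
    have "\<bar>norm (\<Sum>j<m. \<alpha> j *\<^sub>R z (u j)) - p (\<Sum>j<m. \<alpha> j *\<^sub>R et j)\<bar>
        = \<bar>(Xn - En) + (norm (\<Sum>j<m. \<alpha> j *\<^sub>R y (t j)) - p (\<Sum>j<m. \<alpha> j *\<^sub>R et j))\<bar>"
      unfolding eqx eqe Xn_def En_def by simp
    also have "\<dots> \<le> inverse (real (Suc l)) + \<delta>y l"
      using xbound ybound by linarith
    finally show ?thesis unfolding \<delta>_def by simp
    qed
  qed
  then show ?thesis by blast
qed


theorem mainTheorem8:
  fixes k d :: nat
    and e :: "nat \<Rightarrow> 'b::banach"
    and et :: "nat \<Rightarrow> 'c::real_vector"
    and p :: "'c \<Rightarrow> real"
    and V :: "'c set"
  assumes "1 \<le> k" and "1 \<le> d"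
    and "schauder_basis e"
    and "SM k (UNIV :: 'a::banach set) e norm (span (range e))"
    and "\<exists>y M. infinite M \<and> plegma_block d e y \<and> spreading_model d y M et p V"
  shows "SM (k + d) (UNIV :: 'a set) et p V"
proof -
  obtain x :: "nat set \<Rightarrow> 'a" and Mx where infx: "infinite Mx"
    and smx: "spreading_model k x Mx e norm (span (range e))"
    using assms(4) unfolding SM_def by blast
  obtain y My where infy: "infinite My" and pb: "plegma_block d e y"
    and smy: "spreading_model d y My et p V"
    using assms(5) by blast
  have genx: "generates k x Mx e norm" using smx unfolding spreading_model_def by blast
  have geny: "generates d y My et p" using smy unfolding spreading_model_def by blast
  obtain z :: "nat set \<Rightarrow> 'a" where gz: "generates (k+d) z My et p"
    using core[OF assms(1,2,3) infx genx infy pb geny] by blast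
  have "spreading_model (k+d) z My et p V"
    using smy gz unfolding spreading_model_def by blast
  then show ?thesis unfolding SM_def using infy by blast
qed

end
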